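(* For every constant $K>1$ there is a $K$-Lipschitz homeomorphism of a filled ideal hyperbolic triangle to itself which maps each side to itself and multiplies arc length along each side by exactly $K$. *)

theory Defs
  imports "HOL-Analysis.Analysis"
begin

definition upper_half_plane :: "complex set" where
  "upper_half_plane = {z. Im z > 0}"

definition hdist :: "complex \<Rightarrow> complex \<Rightarrow> real" where
  "hdist z w = arcosh (1 + (cmod (z - w))^2 / (2 * Im z * Im w))"

text \<open>The filled ideal triangle with ideal vertices -1, 1 and infinity.\<close>
definition ideal_triangle :: "complex set" where
  "ideal_triangle = {z. Im z > 0 \<and> \<bar>Re z\<bar> \<le> 1 \<and> cmod z \<ge> 1}"

definition side_left :: "complex set" where
  "side_left = {z. Im z > 0 \<and> Re z = -1}"

definition side_right :: "complex set" where
  "side_right = {z. Im z > 0 \<and> Re z = 1}"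

definition side_bottom :: "complex set" where
  "side_bottom = {z. Im z > 0 \<and> cmod z = 1}"

definition triangle_sides :: "complex set set" where
  "triangle_sides = {side_left, side_right, side_bottom}"

end

theory Submission
  imports Defs
begin


definition hX :: "complex \<Rightarrow> complex \<Rightarrow> real" where
  "hX z w = 1 + (cmod (z - w))^2 / (2 * Im z * Im w)"

lemma cmod_diff_sq: "(cmod (z - w))^2 = (Re z - Re w)^2 + (Im z - Im w)^2"
  by (simp add: cmod_power2)

lemma hX_ge1: "Im z > 0 \<Longrightarrow> Im w > 0 \<Longrightarrow> hX z w \<ge> 1"
  unfolding hX_def by (simp add: zero_le_divide_iff)

lemma hdist_hX: "hdist z w = arcosh (hX z w)"
  by (simp add: hdist_def hX_def)

lemma hdist_sym: "hdist z w = hdist w z"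
  unfolding hdist_def by (simp add: norm_minus_commute mult.commute mult.left_commute)

lemma hdist_nonneg: "Im z > 0 \<Longrightarrow> Im w > 0 \<Longrightarrow> hdist z w \<ge> 0"
  using hX_ge1 hdist_hX arcosh_nonneg_real by metis

lemma arcosh_le_iff: fixes x t :: real assumes "x \<ge> 1" "t \<ge> 0" shows "arcosh x \<le> t \<longleftrightarrow> x \<le> cosh t"
proof
  assume "arcosh x \<le> t"
  hence "cosh (arcosh x) \<le> cosh t" using assms cosh_real_nonneg_le_iff[of "arcosh x" t] by simp
  thus "x \<le> cosh t" using assms by simp
next
  assume "x \<le> cosh t"
  hence "arcosh x \<le> arcosh (cosh t)" using assms 
    by (metis arcosh_less_iff_real cosh_real_ge_1 not_le)
  thus "arcosh x \<le> t" using assms by (simp add: arcosh_cosh_real)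
qed

lemma le_arcosh_iff: fixes x t :: real assumes "x \<ge> 1" "t \<ge> 0" shows "t \<le> arcosh x \<longleftrightarrow> cosh t \<le> x"
proof
  assume "t \<le> arcosh x"
  hence "cosh t \<le> cosh (arcosh x)" using assms cosh_real_nonneg_le_iff[of t "arcosh x"] by simp
  thus "cosh t \<le> x" using assms by simp
next
  assume "cosh t \<le> x"
  hence "arcosh (cosh t) \<le> arcosh x" using assms 
    by (metis arcosh_less_iff_real cosh_real_ge_1 not_le)
  thus "t \<le> arcosh x" using assms by (simp add: arcosh_cosh_real)
qed

definition m1 :: "complex \<Rightarrow> complex" where "m1 z = -1 - 4 / (z - 1)"
definition m2 :: "complex \<Rightarrow> complex" where "m2 z = 1 - 4 / (z + 1)"

lemma Im_m1: "Im (m1 z) = 4 * Im z / (cmod (z - 1))^2"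
proof -
  have "(cmod (z - 1))^2 = (Re z - 1)^2 + (Im z)^2" by (simp add: cmod_power2)
  thus ?thesis unfolding m1_def by (simp add: Im_divide)
qed
lemma Im_m2: "Im (m2 z) = 4 * Im z / (cmod (z + 1))^2"
proof -
  have "(cmod (z + 1))^2 = (Re z + 1)^2 + (Im z)^2" by (simp add: cmod_power2)
  thus ?thesis unfolding m2_def by (simp add: Im_divide)
qed

lemma ne1: "Im z > 0 \<Longrightarrow> z - 1 \<noteq> 0" by auto
lemma ne2: "Im z > 0 \<Longrightarrow> z + 1 \<noteq> 0" by (auto simp: complex_eq_iff)

lemma Im_m1_pos: "Im z > 0 \<Longrightarrow> Im (m1 z) > 0"
  using ne1[of z] by (simp add: Im_m1)
lemma Im_m2_pos: "Im z > 0 \<Longrightarrow> Im (m2 z) > 0"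
  using ne2[of z] by (simp add: Im_m2)

lemma four_div: "(u::complex) \<noteq> 0 \<Longrightarrow> 4 / (-4/u) = -u" by (simp add: field_simps)
lemma m1_m2: assumes "Im z > 0" shows "m1 (m2 z) = z"
proof -
  have "m2 z - 1 = -4/(z+1)" unfolding m2_def by simp
  moreover have "4 / (-4/(z+1)) = -(z+1)" using ne2[OF assms] by (rule four_div)
  ultimately show ?thesis unfolding m1_def[of "m2 z"] by simp
qed
lemma m2_m1: assumes "Im z > 0" shows "m2 (m1 z) = z"
proof -
  have "m1 z + 1 = -4/(z-1)" unfolding m1_def by simp
  moreover have "4 / (-4/(z-1)) = -(z-1)" using ne1[OF assms] by (rule four_div)
  ultimately show ?thesis unfolding m2_def[of "m1 z"] by simp
qed
lemma m1_m1: "Im z > 0 \<Longrightarrow> m1 (m1 z) = m2 z"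
proof -
  assume h: "Im z > 0"
  have a: "z - 1 \<noteq> 0" "z + 1 \<noteq> 0" using ne1[OF h] ne2[OF h] by auto
  have b: "m1 z - 1 = -2*(z+1)/(z-1)" using a unfolding m1_def by (simp add: field_simps)
  have "4 / (-2*(z+1)/(z-1)) = (4*(z-1)) / (-2*(z+1))" by (simp only: divide_divide_eq_right)
  also have "\<dots> = (-2) * (-2*(z-1)) / ((-2)*(z+1))" by (simp add: algebra_simps)
  also have "\<dots> = -2*(z-1)/(z+1)" by (subst mult_divide_mult_cancel_left) auto
  finally have c: "4 / (-2*(z+1)/(z-1)) = -2*(z-1)/(z+1)" .
  have "m1 (m1 z) = -1 + 2 * (z-1)/(z+1)" unfolding m1_def[of "m1 z"] b c by (simp add: minus_divide_left algebra_simps)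
  also have "\<dots> = (-(z+1) + 2*(z-1))/(z+1)" using a(2) by (simp add: add_divide_eq_iff divide_diff_eq_iff algebra_simps)
  also have "\<dots> = ((z+1) - 4)/(z+1)" by (simp add: algebra_simps)
  also have "\<dots> = m2 z" unfolding m2_def using a(2) by (simp add: diff_divide_eq_iff algebra_simps)
  finally show ?thesis .
qed
lemma m2_m2: "Im z > 0 \<Longrightarrow> m2 (m2 z) = m1 z"
proof -
  assume h: "Im z > 0"
  have a: "z - 1 \<noteq> 0" "z + 1 \<noteq> 0" using ne1[OF h] ne2[OF h] by auto
  have b: "m2 z + 1 = 2*(z-1)/(z+1)" using a unfolding m2_def by (simp add: field_simps)
  have "4 / (2*(z-1)/(z+1)) = (4*(z+1)) / (2*(z-1))" by (simp only: divide_divide_eq_right)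
  also have "\<dots> = 2 * (2*(z+1)) / (2*(z-1))" by (simp add: algebra_simps)
  also have "\<dots> = 2*(z+1)/(z-1)" by (subst mult_divide_mult_cancel_left) auto
  finally have c: "4 / (2*(z-1)/(z+1)) = 2*(z+1)/(z-1)" .
  have "m2 (m2 z) = 1 - 2 * (z+1)/(z-1)" unfolding m2_def[of "m2 z"] b c by simp
  also have "\<dots> = m1 z" unfolding m1_def using a by (simp add: field_simps)
  finally show ?thesis .
qed

lemma hX_m1: assumes "Im z > 0" "Im w > 0" shows "hX (m1 z) (m1 w) = hX z w"
proof -
  have a: "z - 1 \<noteq> 0" "w - 1 \<noteq> 0" using assms by (auto dest: ne1)
  have "m1 z - m1 w = 4 * (z - w) / ((z - 1) * (w - 1))"
    unfolding m1_def using a by (simp add: field_simps)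
  hence "cmod (m1 z - m1 w) = 4 * cmod (z - w) / (cmod (z-1) * cmod (w-1))"
    by (simp only: norm_divide norm_mult) simp
  hence "(cmod (m1 z - m1 w))^2 = 16 * (cmod (z - w))^2 / ((cmod (z-1))^2 * (cmod (w-1))^2)"
    by (simp add: power_divide power_mult_distrib)
  moreover have "cmod (z-1) > 0" "cmod (w-1) > 0" using a by auto
  ultimately show ?thesis unfolding hX_def Im_m1 by (simp add: field_simps)
qed

lemma hX_m2: assumes "Im z > 0" "Im w > 0" shows "hX (m2 z) (m2 w) = hX z w"
proof -
  have a: "z + 1 \<noteq> 0" "w + 1 \<noteq> 0" using assms by (auto dest: ne2)
  have "m2 z - m2 w = 4 * (z - w) / ((z + 1) * (w + 1))"
    unfolding m2_def using a by (simp add: field_simps)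
  hence "cmod (m2 z - m2 w) = 4 * cmod (z - w) / (cmod (z+1) * cmod (w+1))"
    by (simp only: norm_divide norm_mult) simp
  hence "(cmod (m2 z - m2 w))^2 = 16 * (cmod (z - w))^2 / ((cmod (z+1))^2 * (cmod (w+1))^2)"
    by (simp add: power_divide power_mult_distrib)
  moreover have "cmod (z+1) > 0" "cmod (w+1) > 0" using a by auto
  ultimately show ?thesis unfolding hX_def Im_m2 by (simp add: field_simps)
qed

lemma hdist_m1: "Im z > 0 \<Longrightarrow> Im w > 0 \<Longrightarrow> hdist (m1 z) (m1 w) = hdist z w"
  by (simp add: hdist_hX hX_m1)
lemma hdist_m2: "Im z > 0 \<Longrightarrow> Im w > 0 \<Longrightarrow> hdist (m2 z) (m2 w) = hdist z w"
  by (simp add: hdist_hX hX_m2)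


lemma hX_coords: "hX z w = 1 + ((Re z - Re w)^2 + (Im z - Im w)^2) / (2 * Im z * Im w)"
  unfolding hX_def cmod_diff_sq ..

lemma cosh_ln_div: fixes y1 y2 :: real assumes "y1 > 0" "y2 > 0"
  shows "cosh (ln (y1 / y2)) = 1 + (y1 - y2)^2 / (2 * y1 * y2)"
  using assms by (simp add: cosh_ln_real field_simps power2_eq_square)

lemma arcosh_cosh_abs: "arcosh (cosh t) = \<bar>t\<bar>" for t :: real
  by (metis arcosh_cosh_real abs_ge_zero cosh_real_abs)

lemma hdist_vert: assumes "Re z = Re w" "Im z > 0" "Im w > 0"
  shows "hdist z w = \<bar>ln (Im z / Im w)\<bar>"
proof -
  have e: "hX z w = cosh (ln (Im z / Im w))"
    using assms by (simp add: hX_coords cosh_ln_div)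
  show ?thesis by (simp only: hdist_hX e arcosh_cosh_abs)
qed

lemma ident_aux: "A*i + B*e = (A+B) * ((e + i)/2) + (B - A) * ((e - i)/2)" for A B e i :: real
  by (simp add: field_simps)

lemma lift_core:
  fixes a y yq v :: real
  assumes y: "y > 0" and v: "v > 0" and yy: "yq \<ge> y"
  shows "arcosh (1 + (a^2 + (yq-v)^2)/(2*yq* v)) \<le> arcosh (1 + (a^2+(y-v)^2)/(2*y* v)) + ln (yq/y)"
proof -
  define X where "X = 1 + (a^2+(y-v)^2)/(2*y* v)"
  define A where "A = (a^2+v^2)/(2*y* v)"
  define B where "B = y/(2* v)"
  define e where "e = yq/y"
  have ypos: "yq > 0" using y yy by linarith
  have e1: "e \<ge> 1" unfolding e_def using y yy by simp
  have X1: "X \<ge> 1" unfolding X_def using y v by (simp add: zero_le_divide_iff)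
  have XAB: "X = A + B" unfolding X_def A_def B_def using y v by (simp add: field_simps power2_eq_square)
  have X': "1 + (a^2 + (yq-v)^2)/(2*yq* v) = A/e + B*e"
    unfolding A_def B_def e_def using y v ypos by (simp add: field_simps power2_eq_square)
  have "4*A*B = (a^2+v^2)/v^2" unfolding A_def B_def using y v by (simp add: field_simps power2_eq_square)
  moreover have "(a^2+v^2)/v^2 \<ge> 1" using v by simp
  ultimately have AB: "4*A*B \<ge> 1" by simp
  have Apos: "A \<ge> 0" unfolding A_def using y v by simp
  have X2: "X^2 - 1 \<ge> 0" using X1 by (simp add: one_le_power)
  have key: "B - A \<le> sqrt (X^2 - 1)"
  proof (cases "B \<le> A")
    case True thus ?thesis using real_sqrt_ge_zero[OF X2] by linarith
  next
    case False
    have "(A+B)^2 - (B-A)^2 = 4*A*B" by (simp add: power2_eq_square algebra_simps)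
    hence "(B - A)^2 \<le> X^2 - 1" unfolding XAB using AB by linarith
    thus ?thesis by (rule real_le_rsqrt)
  qed
  define d where "d = arcosh X"
  define s where "s = ln e"
  have d0: "d \<ge> 0" unfolding d_def using X1 by simp
  have s0: "s \<ge> 0" unfolding s_def using e1 by simp
  have coshd: "cosh d = X" unfolding d_def using X1 by simp
  have sinhd: "sinh d = sqrt (X^2 - 1)" unfolding d_def using X1 by (simp add: sinh_arcosh_real)
  have coshs: "cosh s = (e + inverse e)/2" unfolding s_def using e1 by (simp add: cosh_ln_real)
  have sinhs: "sinh s = (e - inverse e)/2" unfolding s_def using e1 by (simp add: sinh_ln_real)
  have einv: "e - inverse e \<ge> 0" using e1
    by (metis diff_ge_0_iff_ge dual_order.trans inverse_le_1_iff le_numeral_extra(4) zero_le_one)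
  have "A/e + B*e = A * inverse e + B*e" by (simp add: divide_inverse)
  also have "\<dots> = X * ((e + inverse e)/2) + (B - A) * ((e - inverse e)/2)"
    unfolding XAB by (rule ident_aux)
  also have "\<dots> \<le> X * ((e + inverse e)/2) + sqrt (X^2-1) * ((e - inverse e)/2)"
    using key einv by (intro add_left_mono mult_right_mono) auto
  also have "\<dots> = cosh (d + s)" by (simp add: cosh_add coshd sinhd coshs sinhs)
  finally have "1 + (a^2 + (yq-v)^2)/(2*yq* v) \<le> cosh (d + s)" using X' by simp
  moreover have "1 + (a^2 + (yq-v)^2)/(2*yq* v) \<ge> 1" using ypos v by (simp add: zero_le_divide_iff)
  ultimately have "arcosh (1 + (a^2 + (yq-v)^2)/(2*yq* v)) \<le> d + s"
    using arcosh_le_iff d0 s0 by simp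
  thus ?thesis unfolding d_def s_def e_def X_def .
qed

lemma lift_gen: assumes "Im z > 0" "Im w > 0" "yq \<ge> Im z"
  shows "hdist (Complex (Re z) yq) w \<le> hdist z w + ln (yq / Im z)"
  using lift_core[OF assms(1,2,3), of "Re z - Re w"] unfolding hdist_hX hX_coords by simp

definition lift :: "real \<Rightarrow> complex \<Rightarrow> complex" where
  "lift K z = Complex (Re z) (2 * (Im z / 2) powr K)"

lemma Re_lift [simp]: "Re (lift K z) = Re z" and Im_lift [simp]: "Im (lift K z) = 2 * (Im z / 2) powr K"
  by (simp_all add: lift_def)

lemma lift_ge: assumes "Im z \<ge> 2" "K \<ge> 1" shows "Im (lift K z) \<ge> Im z"
proof -
  have "(Im z / 2) powr 1 \<le> (Im z / 2) powr K" using assms by (intro powr_mono) auto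
  thus ?thesis using assms by simp
qed

lemma ln_lift: assumes "Im z > 0" shows "ln (Im (lift K z)) = ln 2 + K * ln (Im z / 2)"
  using assms by (simp add: ln_mult ln_powr)

lemma lift_dist: assumes "Im z \<ge> 2" "Im w > 0" "K \<ge> 1"
  shows "hdist (lift K z) w \<le> hdist z w + (K - 1) * ln (Im z / 2)"
proof -
  have "hdist (lift K z) w \<le> hdist z w + ln (Im (lift K z) / Im z)"
    using lift_gen[of z w "Im (lift K z)"] lift_ge[OF assms(1,3)] assms unfolding lift_def by simp
  also have "ln (Im (lift K z) / Im z) = (K - 1) * ln (Im z / 2)"
    using assms ln_lift[of z K] by (simp add: ln_div algebra_simps)
  finally show ?thesis .
qed

lemma depth0: assumes "Im z > 0" "Im w > 0" shows "ln (Im z / Im w) \<le> hdist z w"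
proof (cases "Im z / Im w \<le> 1")
  case True
  hence "ln (Im z / Im w) \<le> 0" using assms by simp
  thus ?thesis using hdist_nonneg[OF assms] by linarith
next
  case False
  have "cosh (ln (Im z / Im w)) \<le> hX z w"
    using assms by (simp add: cosh_ln_div hX_coords divide_right_mono)
  thus ?thesis using le_arcosh_iff[OF hX_ge1[OF assms]] False assms unfolding hdist_hX by simp
qed


lemma cosh_sub: "cosh x - cosh y = 2 * sinh ((x+y)/2) * sinh ((x-y)/2)" for x y :: real
proof -
  have e1: "(x+y)/2 + (x-y)/2 = x" by (simp add: field_simps)
  have e2: "(x+y)/2 - (x-y)/2 = y" by (simp add: field_simps)
  have "cosh x = cosh ((x+y)/2 + (x-y)/2)" by (simp only: e1)
  moreover have "cosh y = cosh ((x+y)/2 - (x-y)/2)" by (simp only: e2)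
  ultimately show ?thesis by (simp only: cosh_add cosh_diff)
qed

lemma cosh_mono_aux: fixes a b K :: real assumes "0 \<le> a" "a \<le> b" "K \<ge> 1"
  shows "cosh (K*a) - cosh a \<le> cosh (K*b) - cosh b"
proof -
  define p where "p = (b+a)/2"
  define q where "q = (b-a)/2"
  have p0: "p \<ge> 0" "q \<ge> 0" unfolding p_def q_def using assms by auto
  have "cosh b - cosh a = 2 * sinh p * sinh q" unfolding p_def q_def by (rule cosh_sub)
  moreover have "cosh (K*b) - cosh (K*a) = 2 * sinh (K*p) * sinh (K*q)"
  proof -
    have "(K*b + K*a)/2 = K*p" "(K*b - K*a)/2 = K*q" unfolding p_def q_def by (simp_all add: algebra_simps)
    thus ?thesis using cosh_sub[of "K*b" "K*a"] by simp
  qed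
  moreover have "sinh p \<le> sinh (K*p)" "sinh q \<le> sinh (K*q)"
    using p0 assms by (simp_all add: mult_le_cancel_right1 order_trans[OF _ mult_right_mono, of _ 1 K])
  moreover have "sinh p \<ge> 0" "sinh q \<ge> 0" using p0 by simp_all
  ultimately have "cosh b - cosh a \<le> cosh (K*b) - cosh (K*a)"
    by (simp add: mult_mono mult_left_mono)
  thus ?thesis by linarith
qed

lemma cross_real: fixes Y v b c q :: real
  assumes Y: "Y \<ge> 2" and v: "v > 0" and q: "q = b^2 + v^2" and q2: "q \<le> 2* v"
  shows "cosh (ln (Y* v/q)) \<le> 1 + (c^2 + (Y-v)^2)/(2*Y* v)"
proof -
  have qp: "q > 0" using q v by (simp add: add_nonneg_pos)
  have Yp: "Y > 0" using Y by simp
  have "b^2 \<ge> 0" by simp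
  hence "v^2 \<le> 2 * v" using q q2 by linarith
  hence v2: "v \<le> 2" using v by (simp add: power2_eq_square)
  have "q \<le> 4" using q2 v2 by simp
  moreover have "2*2 \<le> Y*Y" using Y by (intro mult_mono) auto
  hence "4 \<le> Y^2" by (simp add: power2_eq_square)
  ultimately have qY: "q \<le> Y^2" by simp
  have h2: "q * b^2 \<le> Y^2 * b^2" using qY by (simp add: mult_right_mono)
  have h3: "q * c^2 \<ge> 0" using qp by simp
  have main: "Y^2 * v^2 + q^2 \<le> q * (c^2 + Y^2 + v^2)"
  proof -
    have "q^2 = q * b^2 + q * v^2" using q by (simp add: power2_eq_square algebra_simps)
    moreover have "q * Y^2 = Y^2 * b^2 + Y^2 * v^2" using q by (simp add: algebra_simps)
    ultimately show ?thesis using h2 h3 by (simp add: algebra_simps)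
  qed
  have "cosh (ln (Y* v/q)) = (Y* v/q + inverse (Y* v/q)) / 2"
    using qp Yp v by (intro cosh_ln_real) simp
  also have "\<dots> = (Y^2 * v^2 + q^2) / (2*Y* v *q)"
    using qp Yp v by (simp add: field_simps power2_eq_square)
  also have "\<dots> \<le> (q * (c^2 + Y^2 + v^2)) / (2*Y* v *q)"
    using main qp Yp v by (intro divide_right_mono) auto
  also have "\<dots> = 1 + (c^2 + (Y-v)^2)/(2*Y* v)"
    using qp Yp v by (simp add: field_simps power2_eq_square)
  finally show ?thesis .
qed


lemma depth_from_cosh:
  assumes "Im z > 0" "Im w > 0" "cosh t \<le> hX z w"
  shows "t \<le> hdist z w"
proof (cases "t \<ge> 0")
  case True thus ?thesis using le_arcosh_iff[OF hX_ge1[OF assms(1,2)] True] assms(3) unfolding hdist_hX by simp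
next
  case False thus ?thesis using hdist_nonneg[OF assms(1,2)] by linarith
qed

lemma depthcross1: assumes z: "Im z \<ge> 2" and w: "Im w > 0" and m: "Im (m1 w) \<ge> 2"
  shows "ln (Im z / 2) + ln (Im (m1 w) / 2) \<le> hdist z w"
proof -
  define q where "q = (Re w - 1)^2 + (Im w)^2"
  have qc: "(cmod (w-1))^2 = q" by (simp add: cmod_power2 q_def)
  have qp: "q > 0" using w q_def by (simp add: add_nonneg_pos)
  have im: "Im (m1 w) = 4 * Im w / q" using Im_m1[of w] qc by simp
  have "2 * q \<le> 4 * Im w" using m qp unfolding im by (simp add: le_divide_eq)
  hence q2: "q \<le> 2 * Im w" by simp
  have "ln (Im z / 2) + ln (Im (m1 w) / 2) = ln ((Im z / 2) * (Im (m1 w) / 2))"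
    using z m by (intro ln_mult_pos[symmetric]) auto
  also have "(Im z / 2) * (Im (m1 w) / 2) = Im z * Im w / q" unfolding im by simp
  finally have R: "ln (Im z / 2) + ln (Im (m1 w) / 2) = ln (Im z * Im w / q)" .
  have "cosh (ln (Im z * Im w / q)) \<le> hX z w"
    unfolding hX_coords using cross_real[OF z w q_def q2, of "Re z - Re w"] by simp
  thus ?thesis unfolding R using z w by (intro depth_from_cosh) auto
qed

lemma depthcross2: assumes z: "Im z \<ge> 2" and w: "Im w > 0" and m: "Im (m2 w) \<ge> 2"
  shows "ln (Im z / 2) + ln (Im (m2 w) / 2) \<le> hdist z w"
proof -
  define q where "q = (Re w + 1)^2 + (Im w)^2"
  have qc: "(cmod (w+1))^2 = q" by (simp add: cmod_power2 q_def)
  have qp: "q > 0" using w q_def by (simp add: add_nonneg_pos)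
  have im: "Im (m2 w) = 4 * Im w / q" using Im_m2[of w] qc by simp
  have "2 * q \<le> 4 * Im w" using m qp unfolding im by (simp add: le_divide_eq)
  hence q2: "q \<le> 2 * Im w" by simp
  have "ln (Im z / 2) + ln (Im (m2 w) / 2) = ln ((Im z / 2) * (Im (m2 w) / 2))"
    using z m by (intro ln_mult_pos[symmetric]) auto
  also have "(Im z / 2) * (Im (m2 w) / 2) = Im z * Im w / q" unfolding im by simp
  finally have R: "ln (Im z / 2) + ln (Im (m2 w) / 2) = ln (Im z * Im w / q)" .
  have "cosh (ln (Im z * Im w / q)) \<le> hX z w"
    unfolding hX_coords using cross_real[OF z w q_def q2, of "Re z - Re w"] by simp
  thus ?thesis unfolding R using z w by (intro depth_from_cosh) auto
qed

lemma lift_lip: assumes z: "Im z \<ge> 2" and w: "Im w \<ge> 2" and K: "K \<ge> 1"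
  shows "hdist (lift K z) (lift K w) \<le> K * hdist z w"
proof -
  define y1 where "y1 = Im z"
  define y2 where "y2 = Im w"
  define p1 where "p1 = Im (lift K z)"
  define p2 where "p2 = Im (lift K w)"
  define u where "u = (Re z - Re w)^2"
  have y1p: "y1 > 0" and y2p: "y2 > 0" using z w y1_def y2_def by auto
  have p1y: "p1 \<ge> y1" and p2y: "p2 \<ge> y2" using lift_ge[OF z K] lift_ge[OF w K] p1_def p2_def y1_def y2_def by auto
  have p1p: "p1 > 0" and p2p: "p2 > 0" using p1y p2y y1p y2p by auto
  have X: "hX z w = cosh (ln (y1/y2)) + u/(2*y1*y2)"
    unfolding hX_coords cosh_ln_div[OF y1p y2p] y1_def[symmetric] y2_def[symmetric] u_def[symmetric]
    by (simp add: add_divide_distrib)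
  have X': "hX (lift K z) (lift K w) = cosh (ln (p1/p2)) + u/(2*p1*p2)"
    unfolding hX_coords cosh_ln_div[OF p1p p2p] p1_def[symmetric] p2_def[symmetric]
    by (simp add: add_divide_distrib u_def)
  have "ln (p1/p2) = ln p1 - ln p2" using p1p p2p by (simp add: ln_div)
  also have "\<dots> = K * (ln (y1/2) - ln (y2/2))"
    using ln_lift[of z K] ln_lift[of w K] y1p y2p unfolding p1_def p2_def y1_def y2_def by (simp add: algebra_simps)
  also have "ln (y1/2) - ln (y2/2) = ln (y1/y2)" using y1p y2p by (simp add: ln_div)
  finally have L: "ln (p1/p2) = K * ln (y1/y2)" .
  have "2*y1*y2 \<le> 2*p1*p2" using p1y p2y y1p y2p by (intro mult_mono) auto
  hence U: "u/(2*p1*p2) \<le> u/(2*y1*y2)" unfolding u_def using y1p y2p p1p p2p by (intro divide_left_mono) auto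
  define t where "t = ln (y1/y2)"
  define d where "d = hdist z w"
  have u0: "u/(2*y1*y2) \<ge> 0" unfolding u_def using y1p y2p by simp
  have hXge: "hX z w \<ge> 1" using hX_ge1 y1p y2p y1_def y2_def by simp
  have coshd: "cosh d = hX z w" unfolding d_def hdist_hX using hXge by simp
  have "cosh \<bar>t\<bar> \<le> hX z w" using X u0 unfolding t_def by simp
  hence td: "\<bar>t\<bar> \<le> d" unfolding d_def hdist_hX using le_arcosh_iff[OF hXge] by simp
  have Kt: "cosh (K * t) = cosh (K * \<bar>t\<bar>)"
  proof -
    have "K * \<bar>t\<bar> = \<bar>K * t\<bar>" using K by (simp add: abs_mult)
    thus ?thesis by simp
  qed
  have mono: "cosh (K * \<bar>t\<bar>) - cosh \<bar>t\<bar> \<le> cosh (K * d) - cosh d"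
    using cosh_mono_aux[OF _ td K] by simp
  have "hX (lift K z) (lift K w) \<le> cosh (K * t) + u/(2*y1*y2)"
    unfolding X' L t_def using U by simp
  also have "\<dots> = cosh (K * \<bar>t\<bar>) - cosh \<bar>t\<bar> + hX z w" unfolding Kt X t_def by simp
  also have "\<dots> \<le> cosh (K * d)" using mono coshd by linarith
  finally have "hX (lift K z) (lift K w) \<le> cosh (K * d)" .
  moreover have "hX (lift K z) (lift K w) \<ge> 1" using p1p p2p p1_def p2_def by (intro hX_ge1) auto
  moreover have "K * d \<ge> 0" using K td by simp
  ultimately show ?thesis unfolding hdist_hX[of "lift K z"] d_def[symmetric] using arcosh_le_iff by simp
qed


definition F :: "real \<Rightarrow> complex \<Rightarrow> complex" where
  "F K z = (if Im z \<ge> 2 then lift K z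
            else if Im (m1 z) \<ge> 2 then m2 (lift K (m1 z))
            else if Im (m2 z) \<ge> 2 then m1 (lift K (m2 z)) else z)"

lemma lift_fix: "Im p = 2 \<Longrightarrow> lift K p = p"
  by (simp add: lift_def complex_eq_iff)

lemma Im_lift_pos: "Im p > 0 \<Longrightarrow> Im (lift K p) > 0"
  by simp

lemma m1_circle: assumes "Im z > 0"
  shows "Im (m1 z) \<ge> 2 \<longleftrightarrow> (Re z - 1)^2 + (Im z - 1)^2 \<le> 1"
proof -
  define q where "q = (Re z - 1)^2 + (Im z)^2"
  have qc: "(cmod (z-1))^2 = q" by (simp add: cmod_power2 q_def)
  have qp: "q > 0" using assms q_def by (simp add: add_nonneg_pos)
  have "Im (m1 z) \<ge> 2 \<longleftrightarrow> 2 * q \<le> 4 * Im z" using Im_m1[of z] qc qp by (simp add: le_divide_eq)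
  also have "\<dots> \<longleftrightarrow> (Re z - 1)^2 + (Im z - 1)^2 \<le> 1"
  proof -
    have "2*q - 4*Im z = 2*((Re z - 1)^2 + (Im z - 1)^2 - 1)" unfolding q_def by (simp add: power2_eq_square algebra_simps)
    thus ?thesis by (smt (verit))
  qed
  finally show ?thesis .
qed

lemma m2_circle: assumes "Im z > 0"
  shows "Im (m2 z) \<ge> 2 \<longleftrightarrow> (Re z + 1)^2 + (Im z - 1)^2 \<le> 1"
proof -
  define q where "q = (Re z + 1)^2 + (Im z)^2"
  have qc: "(cmod (z+1))^2 = q" by (simp add: cmod_power2 q_def)
  have qp: "q > 0" using assms q_def by (simp add: add_nonneg_pos)
  have "Im (m2 z) \<ge> 2 \<longleftrightarrow> 2 * q \<le> 4 * Im z" using Im_m2[of z] qc qp by (simp add: le_divide_eq)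
  also have "\<dots> \<longleftrightarrow> (Re z + 1)^2 + (Im z - 1)^2 \<le> 1"
  proof -
    have "2*q - 4*Im z = 2*((Re z + 1)^2 + (Im z - 1)^2 - 1)" unfolding q_def by (simp add: power2_eq_square algebra_simps)
    thus ?thesis by (smt (verit))
  qed
  finally show ?thesis .
qed

lemma tang01: assumes "Im z \<ge> 2" "Im (m1 z) \<ge> 2" shows "Im z = 2 \<and> Im (m1 z) = 2"
proof -
  have c: "(Re z - 1)^2 + (Im z - 1)^2 \<le> 1" using m1_circle assms by simp
  have t1: "(Im z - 1) * 1 \<le> (Im z - 1) * (Im z - 1)" using assms(1) by (intro mult_left_mono) auto
  have "(Im z - 1)^2 \<ge> 1" using assms(1) by (simp add: one_le_power)
  hence "(Re z - 1)^2 \<le> 0" using c by linarith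
  hence r: "Re z = 1" by simp
  have "(Im z - 1)^2 \<le> 1" using c zero_le_power2[of "Re z - 1"] by linarith
  hence "(Im z - 1) * (Im z - 1) \<le> 1" by (simp add: power2_eq_square)
  hence "Im z = 2" using t1 assms(1) by (smt (verit))
  hence z: "z = Complex 1 2" using r by (simp add: complex_eq_iff)
  have "Im (m1 z) = 2" unfolding z m1_def by (simp add: Im_divide)
  thus ?thesis using z by simp
qed

lemma tang02: assumes "Im z \<ge> 2" "Im (m2 z) \<ge> 2" shows "Im z = 2 \<and> Im (m2 z) = 2"
proof -
  have c: "(Re z + 1)^2 + (Im z - 1)^2 \<le> 1" using m2_circle assms by simp
  have t1: "(Im z - 1) * 1 \<le> (Im z - 1) * (Im z - 1)" using assms(1) by (intro mult_left_mono) auto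
  have "(Im z - 1)^2 \<ge> 1" using assms(1) by (simp add: one_le_power)
  hence "(Re z + 1)^2 \<le> 0" using c by linarith
  hence r: "Re z = (-1)" by simp
  have "(Im z - 1)^2 \<le> 1" using c zero_le_power2[of "Re z + 1"] by linarith
  hence "(Im z - 1) * (Im z - 1) \<le> 1" by (simp add: power2_eq_square)
  hence "Im z = 2" using t1 assms(1) by (smt (verit))
  hence z: "z = Complex (-1) 2" using r by (simp add: complex_eq_iff)
  have "Im (m2 z) = 2" unfolding z m2_def by (simp add: Im_divide)
  thus ?thesis using z by simp
qed

lemma tang12: assumes "Im z > 0" "Im (m1 z) \<ge> 2" "Im (m2 z) \<ge> 2" shows "Im (m1 z) = 2 \<and> Im (m2 z) = 2"
proof -
  have c1: "(Re z - 1)^2 + (Im z - 1)^2 \<le> 1" using m1_circle assms by simp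
  have c2: "(Re z + 1)^2 + (Im z - 1)^2 \<le> 1" using m2_circle assms by simp
  have e: "(Re z - 1)^2 + (Re z + 1)^2 = 2 + 2 * (Re z)^2" by (simp add: power2_eq_square algebra_simps)
  have "(Re z)^2 \<le> 0" using e c1 c2 zero_le_power2[of "Im z - 1"] by linarith
  moreover have "(Im z - 1)^2 \<le> 0" using e c1 c2 zero_le_power2[of "Re z"] by linarith
  ultimately have z: "z = Complex 0 1" by (simp add: complex_eq_iff)
  have "Im (m1 z) = 2" "Im (m2 z) = 2" unfolding z m1_def m2_def by (simp_all add: Im_divide)
  thus ?thesis by simp
qed

lemma F0: "Im z \<ge> 2 \<Longrightarrow> F K z = lift K z"
  by (simp add: F_def)

lemma F1: assumes "Im z > 0" "Im (m1 z) \<ge> 2" shows "F K z = m2 (lift K (m1 z))"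
proof (cases "Im z \<ge> 2")
  case True
  with tang01 assms have "Im z = 2" "Im (m1 z) = 2" by auto
  thus ?thesis using True assms by (simp add: F_def lift_fix m2_m1)
qed (use assms in \<open>simp add: F_def\<close>)

lemma F2: assumes "Im z > 0" "Im (m2 z) \<ge> 2" shows "F K z = m1 (lift K (m2 z))"
proof (cases "Im z \<ge> 2")
  case True
  with tang02 assms have "Im z = 2" "Im (m2 z) = 2" by auto
  thus ?thesis using True assms by (simp add: F_def lift_fix m1_m2)
next
  case False
  show ?thesis
  proof (cases "Im (m1 z) \<ge> 2")
    case True
    with tang12 assms have "Im (m1 z) = 2" "Im (m2 z) = 2" by auto
    thus ?thesis using True False assms by (simp add: F_def lift_fix m1_m2 m2_m1)
  qed (use assms False in \<open>simp add: F_def\<close>)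
qed

lemma F3: assumes "Im z > 0" "Im z \<le> 2" "Im (m1 z) \<le> 2" "Im (m2 z) \<le> 2" shows "F K z = z"
  using assms by (auto simp add: F_def lift_fix m1_m2 m2_m1)

lemma F_Im_pos: assumes "Im z > 0" shows "Im (F K z) > 0"
  using assms by (simp add: F_def Im_m1_pos Im_m2_pos)


definition pc :: "complex \<Rightarrow> nat" where
  "pc z = (if Im z \<ge> 2 then 0 else if Im (m1 z) \<ge> 2 then 1 else if Im (m2 z) \<ge> 2 then 2 else 3)"

definition dep :: "complex \<Rightarrow> real" where
  "dep z = (if Im z \<ge> 2 then ln (Im z / 2) else if Im (m1 z) \<ge> 2 then ln (Im (m1 z) / 2)
            else if Im (m2 z) \<ge> 2 then ln (Im (m2 z) / 2) else 0)"

lemma dep_nonneg: "dep z \<ge> 0"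
  by (simp add: dep_def)

lemma onesided: assumes z: "Im z > 0" and w: "Im w > 0" and K: "K \<ge> 1"
  shows "hdist (F K z) w \<le> hdist z w + (K - 1) * dep z"
proof -
  consider (a) "Im z \<ge> 2" | (b) "\<not> Im z \<ge> 2" "Im (m1 z) \<ge> 2"
    | (c) "\<not> Im z \<ge> 2" "\<not> Im (m1 z) \<ge> 2" "Im (m2 z) \<ge> 2"
    | (d) "\<not> Im z \<ge> 2" "\<not> Im (m1 z) \<ge> 2" "\<not> Im (m2 z) \<ge> 2" by blast
  thus ?thesis
  proof cases
    case a thus ?thesis using lift_dist[OF a w K] by (simp add: F0 dep_def)
  next
    case b
    have L: "Im (lift K (m1 z)) > 0" using Im_m1_pos[OF z] by simp
    have "hdist (F K z) w = hdist (m2 (lift K (m1 z))) w" using F1[OF z b(2)] by simp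
    also have "\<dots> = hdist (m1 (m2 (lift K (m1 z)))) (m1 w)"
      using hdist_m1[OF Im_m2_pos[OF L] w] by simp
    also have "\<dots> = hdist (lift K (m1 z)) (m1 w)" using m1_m2[OF L] by simp
    also have "\<dots> \<le> hdist (m1 z) (m1 w) + (K - 1) * ln (Im (m1 z) / 2)"
      using lift_dist[OF b(2) Im_m1_pos[OF w] K] .
    also have "\<dots> = hdist z w + (K - 1) * dep z" using b hdist_m1[OF z w] by (simp add: dep_def)
    finally show ?thesis .
  next
    case c
    have L: "Im (lift K (m2 z)) > 0" using Im_m2_pos[OF z] by simp
    have "hdist (F K z) w = hdist (m1 (lift K (m2 z))) w" using F2[OF z c(3)] by simp
    also have "\<dots> = hdist (m2 (m1 (lift K (m2 z)))) (m2 w)"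
      using hdist_m2[OF Im_m1_pos[OF L] w] by simp
    also have "\<dots> = hdist (lift K (m2 z)) (m2 w)" using m2_m1[OF L] by simp
    also have "\<dots> \<le> hdist (m2 z) (m2 w) + (K - 1) * ln (Im (m2 z) / 2)"
      using lift_dist[OF c(3) Im_m2_pos[OF w] K] .
    also have "\<dots> = hdist z w + (K - 1) * dep z" using c hdist_m2[OF z w] by (simp add: dep_def)
    finally show ?thesis .
  next
    case d thus ?thesis using z by (simp add: F_def dep_def)
  qed
qed


lemma dep_le_M: assumes z: "Im z > 0" and w: "Im w > 0" and pw: "pc w = 3"
  shows "dep z \<le> hdist z w"
proof -
  have w2: "Im w < 2" "Im (m1 w) < 2" "Im (m2 w) < 2" using pw by (auto simp: pc_def split: if_splits)
  have gen: "ln (Im p / 2) \<le> hdist p q" if "Im p > 0" "Im q > 0" "Im q < 2" for p q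
  proof -
    have "Im p / 2 \<le> Im p / Im q" using that by (intro divide_left_mono) auto
    hence "ln (Im p / 2) \<le> ln (Im p / Im q)" using that by simp
    also have "\<dots> \<le> hdist p q" using depth0 that by simp
    finally show ?thesis .
  qed
  consider (a) "Im z \<ge> 2" | (b) "\<not> Im z \<ge> 2" "Im (m1 z) \<ge> 2"
    | (c) "\<not> Im z \<ge> 2" "\<not> Im (m1 z) \<ge> 2" "Im (m2 z) \<ge> 2"
    | (d) "\<not> Im z \<ge> 2" "\<not> Im (m1 z) \<ge> 2" "\<not> Im (m2 z) \<ge> 2" by blast
  thus ?thesis
  proof cases
    case a thus ?thesis using gen[OF z w w2(1)] by (simp add: dep_def)
  next
    case b thus ?thesis using gen[OF Im_m1_pos[OF z] Im_m1_pos[OF w] w2(2)] hdist_m1[OF z w] by (simp add: dep_def)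
  next
    case c thus ?thesis using gen[OF Im_m2_pos[OF z] Im_m2_pos[OF w] w2(3)] hdist_m2[OF z w] by (simp add: dep_def)
  next
    case d thus ?thesis using hdist_nonneg[OF z w] by (simp add: dep_def)
  qed
qed

lemma dep_cross_01: assumes z: "Im z > 0" and w: "Im w > 0" and "pc z = 0" "pc w = 1"
  shows "dep z + dep w \<le> hdist z w"
proof -
  have a: "Im z \<ge> 2" "Im (m1 w) \<ge> 2" "\<not> Im w \<ge> 2" using assms(3,4) by (auto simp: pc_def split: if_splits)
  thus ?thesis using depthcross1[OF a(1) w a(2)] by (simp add: dep_def)
qed

lemma dep_cross_02: assumes z: "Im z > 0" and w: "Im w > 0" and "pc z = 0" "pc w = 2"
  shows "dep z + dep w \<le> hdist z w"
proof -
  have a: "Im z \<ge> 2" "Im (m2 w) \<ge> 2" "\<not> Im w \<ge> 2" "\<not> Im (m1 w) \<ge> 2" using assms(3,4) by (auto simp: pc_def split: if_splits)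
  thus ?thesis using depthcross2[OF a(1) w a(2)] by (simp add: dep_def)
qed

lemma dep_cross_12: assumes z: "Im z > 0" and w: "Im w > 0" and "pc z = 1" "pc w = 2"
  shows "dep z + dep w \<le> hdist z w"
proof -
  have a: "Im (m1 z) \<ge> 2" "\<not> Im z \<ge> 2" "Im (m2 w) \<ge> 2" "\<not> Im w \<ge> 2" "\<not> Im (m1 w) \<ge> 2"
    using assms(3,4) by (auto simp: pc_def split: if_splits)
  have "Im (m1 (m1 w)) \<ge> 2" using a m1_m1[OF w] by simp
  hence "ln (Im (m1 z) / 2) + ln (Im (m1 (m1 w)) / 2) \<le> hdist (m1 z) (m1 w)"
    using depthcross1[OF a(1) Im_m1_pos[OF w]] by simp
  thus ?thesis using a m1_m1[OF w] hdist_m1[OF z w] by (simp add: dep_def)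
qed


lemma dep_M: "pc w = 3 \<Longrightarrow> dep w = 0"
  unfolding pc_def dep_def by (auto split: if_splits)

lemma pc3: "pc w = 3 \<Longrightarrow> Im w \<le> 2 \<and> Im (m1 w) \<le> 2 \<and> Im (m2 w) \<le> 2"
  unfolding pc_def by (auto split: if_splits)

lemma dep_cross: assumes z: "Im z > 0" and w: "Im w > 0" and ne: "pc z \<noteq> pc w"
  shows "dep z + dep w \<le> hdist z w"
proof -
  have r: "pc z \<le> 3" "pc w \<le> 3" by (simp_all add: pc_def)
  show ?thesis
  proof (cases "pc w = 3")
    case True thus ?thesis using dep_le_M[OF z w True] dep_M[OF True] by simp
  next
    case F1: False
    show ?thesis
    proof (cases "pc z = 3")
      case True thus ?thesis using dep_le_M[OF w z True] dep_M[OF True] hdist_sym[of z w] by simp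
    next
      case False
      have hs: "hdist w z = hdist z w" by (rule hdist_sym)
      consider "pc z = 0 \<and> pc w = 1" | "pc z = 0 \<and> pc w = 2" | "pc z = 1 \<and> pc w = 2"
        | "pc z = 1 \<and> pc w = 0" | "pc z = 2 \<and> pc w = 0" | "pc z = 2 \<and> pc w = 1"
      proof -
        have cz: "pc z = 0 \<or> pc z = 1 \<or> pc z = 2" using r(1) False by linarith
        have cw: "pc w = 0 \<or> pc w = 1 \<or> pc w = 2" using r(2) F1 by linarith
        show ?thesis using cz cw ne that by auto
      qed
      thus ?thesis
      proof cases
        case 1 thus ?thesis using dep_cross_01[OF z w] by blast
      next
        case 2 thus ?thesis using dep_cross_02[OF z w] by blast
      next
        case 3 thus ?thesis using dep_cross_12[OF z w] by blast
      next
        case 4 thus ?thesis using dep_cross_01[OF w z] hs by linarith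
      next
        case 5 thus ?thesis using dep_cross_02[OF w z] hs by linarith
      next
        case 6 thus ?thesis using dep_cross_12[OF w z] hs by linarith
      qed
    qed
  qed
qed

lemma pc0: "pc z = 0 \<Longrightarrow> Im z \<ge> 2" by (simp add: pc_def split: if_splits)
lemma pc1: "pc z = 1 \<Longrightarrow> Im (m1 z) \<ge> 2" by (simp add: pc_def split: if_splits)
lemma pc2: "pc z = 2 \<Longrightarrow> Im (m2 z) \<ge> 2" by (simp add: pc_def split: if_splits)

lemma same_piece: assumes z: "Im z > 0" and w: "Im w > 0" and K: "K \<ge> 1" and eq: "pc z = pc w"
  shows "hdist (F K z) (F K w) \<le> K * hdist z w"
proof -
  have r: "pc z \<le> 3" by (simp add: pc_def)
  have "pc z = 0 \<or> pc z = 1 \<or> pc z = 2 \<or> pc z = 3" using r by linarith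
  then consider "pc z = 0" | "pc z = 1" | "pc z = 2" | "pc z = 3" by auto
  thus ?thesis
  proof cases
    case 1
    hence a: "Im z \<ge> 2" "Im w \<ge> 2" using eq pc0 by metis+
    have "F K z = lift K z" "F K w = lift K w" using F0 a by auto
    thus ?thesis using lift_lip[OF a K] by simp
  next
    case 2
    hence a: "Im (m1 z) \<ge> 2" "Im (m1 w) \<ge> 2" using eq pc1 by metis+
    have LA: "Im (lift K (m1 z)) > 0" using Im_m1_pos[OF z] by (rule Im_lift_pos)
    have LB: "Im (lift K (m1 w)) > 0" using Im_m1_pos[OF w] by (rule Im_lift_pos)
    have "hdist (F K z) (F K w) = hdist (m2 (lift K (m1 z))) (m2 (lift K (m1 w)))"
      using F1[OF z a(1)] F1[OF w a(2)] by simp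
    also have "\<dots> = hdist (lift K (m1 z)) (lift K (m1 w))" by (rule hdist_m2[OF LA LB])
    also have "\<dots> \<le> K * hdist (m1 z) (m1 w)" using lift_lip[OF a K] .
    also have "hdist (m1 z) (m1 w) = hdist z w" by (rule hdist_m1[OF z w])
    finally show ?thesis .
  next
    case 3
    hence a: "Im (m2 z) \<ge> 2" "Im (m2 w) \<ge> 2" using eq pc2 by metis+
    have LA: "Im (lift K (m2 z)) > 0" using Im_m2_pos[OF z] by (rule Im_lift_pos)
    have LB: "Im (lift K (m2 w)) > 0" using Im_m2_pos[OF w] by (rule Im_lift_pos)
    have "hdist (F K z) (F K w) = hdist (m1 (lift K (m2 z))) (m1 (lift K (m2 w)))"
      using F2[OF z a(1)] F2[OF w a(2)] by simp
    also have "\<dots> = hdist (lift K (m2 z)) (lift K (m2 w))" by (rule hdist_m1[OF LA LB])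
    also have "\<dots> \<le> K * hdist (m2 z) (m2 w)" using lift_lip[OF a K] .
    also have "hdist (m2 z) (m2 w) = hdist z w" by (rule hdist_m2[OF z w])
    finally show ?thesis .
  next
    case 4
    have "F K z = z" using pc3[OF 4] F3[OF z] by blast
    moreover have "F K w = w" using pc3[of w] 4 eq F3[OF w] by metis
    moreover have "hdist z w \<le> K * hdist z w" using hdist_nonneg[OF z w] K by (simp add: mult_le_cancel_right1)
    ultimately show ?thesis by simp
  qed
qed

lemma F_lip: assumes z: "Im z > 0" and w: "Im w > 0" and K: "K \<ge> 1"
  shows "hdist (F K z) (F K w) \<le> K * hdist z w"
proof (cases "pc z = pc w")
  case True thus ?thesis using same_piece[OF z w K] by simp
next
  case False
  have "hdist (F K z) (F K w) \<le> hdist z (F K w) + (K - 1) * dep z"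
    using onesided[OF z F_Im_pos[OF w] K] .
  also have "hdist z (F K w) = hdist (F K w) z" by (rule hdist_sym)
  also have "\<dots> \<le> hdist w z + (K - 1) * dep w" using onesided[OF w z K] .
  finally have "hdist (F K z) (F K w) \<le> hdist z w + (K - 1) * (dep z + dep w)"
    by (simp add: hdist_sym[of w z] algebra_simps)
  also have "\<dots> \<le> hdist z w + (K - 1) * hdist z w"
    using dep_cross[OF z w False] K by (intro add_left_mono mult_left_mono) auto
  finally show ?thesis by (simp add: algebra_simps)
qed


lemma Re_m1: "Re (m1 z) = -1 + 4 * (1 - Re z) / ((Re z - 1)^2 + (Im z)^2)"
  unfolding m1_def by (simp add: Re_divide power2_eq_square algebra_simps diff_divide_distrib add_divide_distrib)

lemma Im_m1': "Im (m1 z) = 4 * Im z / ((Re z - 1)^2 + (Im z)^2)"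
  using Im_m1[of z] by (simp add: cmod_power2)

lemma norm_aux: fixes a b q :: real assumes "q = (a-1)^2 + b^2" "q > 0"
  shows "(-1 + 4 * (1 - a) / q)^2 + (4 * b / q)^2 = 1 + 8 * (1 + a) / q"
proof -
  have e1: "(-1 + 4 * (1 - a) / q)^2 + (4 * b / q)^2 = 1 - 8 * (1 - a) / q + 16 * ((1-a)^2 + b^2) / q^2"
    using assms(2) by (simp add: power2_eq_square field_simps)
  have e2: "(1-a)^2 + b^2 = q" using assms(1) by (simp add: power2_eq_square algebra_simps)
  have e3: "16 * q / q^2 = 16 / q" using assms(2) by (simp add: power2_eq_square)
  have e4: "1 - 8 * (1 - a) / q + 16 / q = 1 + 8 * (1 + a) / q" using assms(2) by (simp add: field_simps)
  have "(-1 + 4 * (1 - a) / q)^2 + (4 * b / q)^2 = 1 - 8 * (1 - a) / q + 16 / q" using e1 e2 e3 by simp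
  with e4 show ?thesis by simp
qed

lemma m1_T: assumes "z \<in> ideal_triangle" shows "m1 z \<in> ideal_triangle"
proof -
  define a where "a = Re z"
  define b where "b = Im z"
  define q where "q = (a-1)^2 + b^2"
  have b: "b > 0" and a1: "\<bar>a\<bar> \<le> 1" and n: "cmod z \<ge> 1"
    using assms unfolding ideal_triangle_def a_def b_def by auto
  have ab: "a^2 + b^2 \<ge> 1" using n unfolding a_def b_def
    by (metis cmod_power2 one_le_power power_one)
  have qp: "q > 0" unfolding q_def using b by (simp add: add_nonneg_pos)
  have Re: "Re (m1 z) = -1 + 4 * (1 - a) / q" unfolding Re_m1 a_def b_def q_def ..
  have Im: "Im (m1 z) = 4 * b / q" unfolding Im_m1' a_def b_def q_def ..
  have "Im (m1 z) > 0" using b qp Im by simp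
  moreover have "Re (m1 z) \<ge> -1" using Re a1 qp by simp
  moreover have "Re (m1 z) \<le> 1"
  proof -
    have "4 * (1 - a) \<le> 2 * q" unfolding q_def using ab by (simp add: power2_eq_square algebra_simps)
    hence "4 * (1 - a) / q \<le> 2" using qp by (simp add: divide_le_eq)
    thus ?thesis using Re by simp
  qed
  moreover have "cmod (m1 z) \<ge> 1"
  proof -
    have "(cmod (m1 z))^2 = 1 + 8 * (1 + a) / q"
      unfolding cmod_power2 Re Im using norm_aux[OF q_def qp] .
    also have "\<dots> \<ge> 1" using a1 qp by simp
    finally show ?thesis using power2_le_imp_le[of 1 "cmod (m1 z)"] by simp
  qed
  ultimately show ?thesis unfolding ideal_triangle_def by auto
qed

lemma m2_T: assumes "z \<in> ideal_triangle" shows "m2 z \<in> ideal_triangle"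
proof -
  have "Im z > 0" using assms by (simp add: ideal_triangle_def)
  thus ?thesis using m1_T[OF m1_T[OF assms]] m1_m1 by simp
qed

lemma lift_ge2: assumes "K > 0" "Im p \<ge> 2" shows "Im (lift K p) \<ge> 2"
proof -
  have "(Im p / 2) powr K \<ge> 1" using assms by (intro ge_one_powr_ge_zero) auto
  thus ?thesis by simp
qed

lemma lift_T: assumes "K > 0" "p \<in> ideal_triangle" "Im p \<ge> 2"
  shows "lift K p \<in> ideal_triangle" "Im (lift K p) \<ge> 2"
proof -
  show i: "Im (lift K p) \<ge> 2" by (rule lift_ge2[OF assms(1,3)])
  have "cmod (lift K p) \<ge> \<bar>Im (lift K p)\<bar>" by (rule abs_Im_le_cmod)
  thus "lift K p \<in> ideal_triangle" using i assms(2) unfolding ideal_triangle_def by auto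
qed

lemma F_T: assumes K: "K > 0" and z: "z \<in> ideal_triangle" shows "F K z \<in> ideal_triangle"
proof -
  have zp: "Im z > 0" using z by (simp add: ideal_triangle_def)
  consider (a) "Im z \<ge> 2" | (b) "\<not> Im z \<ge> 2" "Im (m1 z) \<ge> 2"
    | (c) "\<not> Im z \<ge> 2" "\<not> Im (m1 z) \<ge> 2" "Im (m2 z) \<ge> 2"
    | (d) "\<not> Im z \<ge> 2" "\<not> Im (m1 z) \<ge> 2" "\<not> Im (m2 z) \<ge> 2" by blast
  thus ?thesis
  proof cases
    case a thus ?thesis using lift_T[OF K z a] F0[OF a] by simp
  next
    case b thus ?thesis using m2_T[OF lift_T(1)[OF K m1_T[OF z] b(2)]] F1[OF zp b(2)] by simp
  next
    case c thus ?thesis using m1_T[OF lift_T(1)[OF K m2_T[OF z] c(3)]] F2[OF zp c(3)] by simp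
  next
    case d thus ?thesis using z by (simp add: F_def)
  qed
qed

lemma lift_inv: assumes "K > 0" "Im p > 0" shows "lift K (lift (1/K) p) = p"
proof -
  have "((Im p / 2) powr (1/K)) powr K = (Im p / 2) powr 1" using assms by (simp add: powr_powr)
  also have "\<dots> = Im p / 2" using assms by simp
  finally show ?thesis by (simp add: lift_def complex_eq_iff)
qed

lemma F_inv: assumes K: "K > 0" and zp: "Im z > 0" shows "F K (F (1/K) z) = z"
proof -
  have K': "1/K > 0" using K by simp
  consider (a) "Im z \<ge> 2" | (b) "\<not> Im z \<ge> 2" "Im (m1 z) \<ge> 2"
    | (c) "\<not> Im z \<ge> 2" "\<not> Im (m1 z) \<ge> 2" "Im (m2 z) \<ge> 2"
    | (d) "\<not> Im z \<ge> 2" "\<not> Im (m1 z) \<ge> 2" "\<not> Im (m2 z) \<ge> 2" by blast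
  thus ?thesis
  proof cases
    case a
    have "F (1/K) z = lift (1/K) z" by (rule F0[OF a])
    moreover have "Im (lift (1/K) z) \<ge> 2" by (rule lift_ge2[OF K' a])
    ultimately show ?thesis using F0 lift_inv[OF K zp] by simp
  next
    case b
    define p where "p = lift (1/K) (m1 z)"
    have pp: "Im p > 0" unfolding p_def using Im_m1_pos[OF zp] by simp
    have p2: "Im p \<ge> 2" unfolding p_def by (rule lift_ge2[OF K' b(2)])
    have "F (1/K) z = m2 p" unfolding p_def by (rule F1[OF zp b(2)])
    moreover have "m1 (m2 p) = p" by (rule m1_m2[OF pp])
    moreover have "F K (m2 p) = m2 (lift K (m1 (m2 p)))"
      using F1[OF Im_m2_pos[OF pp]] p2 m1_m2[OF pp] by simp
    ultimately show ?thesis using lift_inv[OF K Im_m1_pos[OF zp]] m2_m1[OF zp] unfolding p_def by simp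
  next
    case c
    define p where "p = lift (1/K) (m2 z)"
    have pp: "Im p > 0" unfolding p_def using Im_m2_pos[OF zp] by simp
    have p2: "Im p \<ge> 2" unfolding p_def by (rule lift_ge2[OF K' c(3)])
    have "F (1/K) z = m1 p" unfolding p_def by (rule F2[OF zp c(3)])
    moreover have "m2 (m1 p) = p" by (rule m2_m1[OF pp])
    moreover have "F K (m1 p) = m1 (lift K (m2 (m1 p)))"
      using F2[OF Im_m1_pos[OF pp]] p2 m2_m1[OF pp] by simp
    ultimately show ?thesis using lift_inv[OF K Im_m2_pos[OF zp]] m1_m2[OF zp] unfolding p_def by simp
  next
    case d
    hence "F (1/K) z = z" "F K z = z" using F3[OF zp] by auto
    thus ?thesis by simp
  qed
qed


abbreviation HP :: "complex set" where "HP \<equiv> {z. Im z > 0}"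

lemma cont_m1: "continuous_on HP m1"
  unfolding m1_def by (intro continuous_intros) (auto dest: ne1)
lemma cont_m2: "continuous_on HP m2"
  unfolding m2_def by (intro continuous_intros) (auto dest: ne2)
lemma cont_lift: "continuous_on HP (lift K)"
  unfolding lift_def by (intro continuous_intros) auto

lemma m1_HP: "m1 ` HP \<subseteq> HP" using Im_m1_pos by auto
lemma m2_HP: "m2 ` HP \<subseteq> HP" using Im_m2_pos by auto
lemma lift_HP: "lift K ` HP \<subseteq> HP" by auto

lemma cont_b1: "continuous_on HP (\<lambda>z. m2 (lift K (m1 z)))"
  by (rule continuous_on_compose2[OF cont_m2 continuous_on_compose2[OF cont_lift cont_m1 m1_HP]])
     (use m1_HP in auto)
lemma cont_b2: "continuous_on HP (\<lambda>z. m1 (lift K (m2 z)))"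
  by (rule continuous_on_compose2[OF cont_m1 continuous_on_compose2[OF cont_lift cont_m2 m2_HP]])
     (use m2_HP in auto)

lemma cont_Im1: "continuous_on HP (\<lambda>z. Im (m1 z))"
  by (intro continuous_intros cont_m1)
lemma cont_Im2: "continuous_on HP (\<lambda>z. Im (m2 z))"
  by (intro continuous_intros cont_m2)
lemma cont_Im0: "continuous_on HP (\<lambda>z. Im z)"
  by (intro continuous_intros)

lemma F_cont: "continuous_on HP (F K)"
proof -
  define P0 where "P0 = HP \<inter> (\<lambda>z. Im z) -` {2..}"
  define P1 where "P1 = HP \<inter> (\<lambda>z. Im (m1 z)) -` {2..}"
  define P2 where "P2 = HP \<inter> (\<lambda>z. Im (m2 z)) -` {2..}"
  define Q0 where "Q0 = HP \<inter> (\<lambda>z. Im z) -` {..2}"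
  define Q1 where "Q1 = HP \<inter> (\<lambda>z. Im (m1 z)) -` {..2}"
  define Q2 where "Q2 = HP \<inter> (\<lambda>z. Im (m2 z)) -` {..2}"
  define PM where "PM = Q0 \<inter> Q1 \<inter> Q2"
  have c0: "closedin (top_of_set HP) P0" unfolding P0_def by (rule continuous_closedin_preimage[OF cont_Im0]) simp
  have c1: "closedin (top_of_set HP) P1" unfolding P1_def by (rule continuous_closedin_preimage[OF cont_Im1]) simp
  have c2: "closedin (top_of_set HP) P2" unfolding P2_def by (rule continuous_closedin_preimage[OF cont_Im2]) simp
  have "closedin (top_of_set HP) Q0" unfolding Q0_def by (rule continuous_closedin_preimage[OF cont_Im0]) simp
  moreover have "closedin (top_of_set HP) Q1" unfolding Q1_def by (rule continuous_closedin_preimage[OF cont_Im1]) simp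
  moreover have "closedin (top_of_set HP) Q2" unfolding Q2_def by (rule continuous_closedin_preimage[OF cont_Im2]) simp
  ultimately have cM: "closedin (top_of_set HP) PM" unfolding PM_def by (intro closedin_Int)
  have U: "HP = P0 \<union> (P1 \<union> (P2 \<union> PM))"
    unfolding P0_def P1_def P2_def PM_def Q0_def Q1_def Q2_def by auto
  have s: "P0 \<subseteq> HP" "P1 \<subseteq> HP" "P2 \<subseteq> HP" "PM \<subseteq> HP"
    unfolding P0_def P1_def P2_def PM_def Q0_def by auto
  have f0: "continuous_on P0 (F K)"
    by (rule continuous_on_eq[OF continuous_on_subset[OF cont_lift s(1)]]) (auto simp: P0_def F0)
  have f1: "continuous_on P1 (F K)"
    by (rule continuous_on_eq[OF continuous_on_subset[OF cont_b1 s(2)]]) (auto simp: P1_def F1)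
  have f2: "continuous_on P2 (F K)"
    by (rule continuous_on_eq[OF continuous_on_subset[OF cont_b2 s(3)]]) (auto simp: P2_def F2)
  have fM: "continuous_on PM (F K)"
    by (rule continuous_on_eq[OF continuous_on_id]) (auto simp: PM_def Q0_def Q1_def Q2_def F3)
  have "continuous_on (P2 \<union> PM) (F K)"
    by (rule continuous_on_Un_local[OF closedin_subset_trans[OF c2] closedin_subset_trans[OF cM] f2 fM])
       (use s in auto)
  hence "continuous_on (P1 \<union> (P2 \<union> PM)) (F K)"
    by (intro continuous_on_Un_local[OF closedin_subset_trans[OF c1] closedin_subset_trans[OF _] f1])
       (use s U c2 cM in \<open>auto intro: closedin_Un\<close>)
  hence "continuous_on (P0 \<union> (P1 \<union> (P2 \<union> PM))) (F K)"
    by (intro continuous_on_Un_local[OF closedin_subset_trans[OF c0] closedin_subset_trans[OF _] f0])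
       (use s U c1 c2 cM in \<open>auto intro: closedin_Un\<close>)
  thus ?thesis using U by simp
qed


definition Gf :: "real \<Rightarrow> real \<Rightarrow> real" where "Gf K y = 2 * (y / 2) powr K"

lemma Gf_pos: "y > 0 \<Longrightarrow> Gf K y > 0" by (simp add: Gf_def)

lemma lift_C: "lift K (Complex a y) = Complex a (Gf K y)" by (simp add: lift_def Gf_def)

lemma m1_v1: "y > 0 \<Longrightarrow> m1 (Complex 1 y) = Complex (-1) (4 / y)"
  by (simp add: m1_def complex_eq_iff Re_divide Im_divide power2_eq_square)

lemma m2_vm1: "y > 0 \<Longrightarrow> m2 (Complex (-1) y) = Complex 1 (4 / y)"
  by (simp add: m2_def complex_eq_iff Re_divide Im_divide power2_eq_square)

lemma Ginv: assumes "y > 0" shows "4 / Gf K (4 / y) = Gf K y" "Gf K (4 / y) = 4 / Gf K y"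
proof -
  have e: "4 / y / 2 = inverse (y / 2)" by (simp add: field_simps)
  have "(4 / y / 2) powr K = inverse ((y/2) powr K)" unfolding e by (rule inverse_powr)
  moreover have "(y/2) powr K > 0" using assms by simp
  ultimately show "4 / Gf K (4 / y) = Gf K y" "Gf K (4 / y) = 4 / Gf K y"
    unfolding Gf_def by (simp_all add: field_simps)
qed

lemma F_right: assumes "y > 0" shows "F K (Complex 1 y) = Complex 1 (Gf K y)"
proof (cases "y \<ge> 2")
  case True thus ?thesis by (simp add: F0 lift_C)
next
  case False
  have "Im (m1 (Complex 1 y)) \<ge> 2" using False assms by (simp add: m1_v1 le_divide_eq)
  hence "F K (Complex 1 y) = m2 (lift K (m1 (Complex 1 y)))" using assms by (intro F1) auto
  also have "\<dots> = Complex 1 (4 / Gf K (4/y))" using assms by (simp add: m1_v1 lift_C m2_vm1 Gf_pos)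
  finally show ?thesis using Ginv(1)[OF assms] by simp
qed

lemma F_left: assumes "y > 0" shows "F K (Complex (-1) y) = Complex (-1) (Gf K y)"
proof (cases "y \<ge> 2")
  case True thus ?thesis by (simp add: F0 lift_C)
next
  case False
  have "Im (m2 (Complex (-1) y)) \<ge> 2" using False assms by (simp add: m2_vm1 le_divide_eq)
  hence "F K (Complex (-1) y) = m1 (lift K (m2 (Complex (-1) y)))" using assms by (intro F2) auto
  also have "\<dots> = Complex (-1) (4 / Gf K (4/y))" using assms by (simp add: m2_vm1 lift_C m1_v1 Gf_pos)
  finally show ?thesis using Ginv(1)[OF assms] by simp
qed

lemma F_bottom: assumes t: "t > 0" shows "F K (m2 (Complex 1 t)) = m2 (Complex 1 (Gf K t))"
proof -
  define z where "z = m2 (Complex 1 t)"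
  have zp: "Im z > 0" unfolding z_def using t by (intro Im_m2_pos) simp
  show ?thesis
  proof (cases "t \<ge> 2")
    case True
    have m: "m1 z = Complex 1 t" unfolding z_def using t by (simp add: m1_m2)
    have "F K z = m2 (lift K (m1 z))" using zp True m by (intro F1) auto
    thus ?thesis unfolding z_def[symmetric] m by (simp add: lift_C)
  next
    case False
    have m: "m2 z = Complex (-1) (4 / t)" unfolding z_def using t by (simp add: m2_m2 m1_v1)
    have "Im (m2 z) \<ge> 2" using False t m by (simp add: le_divide_eq)
    hence "F K z = m1 (lift K (m2 z))" using zp by (intro F2) auto
    also have "\<dots> = m1 (Complex (-1) (4 / Gf K t))" unfolding m lift_C Ginv(2)[OF t] ..
    also have "\<dots> = m1 (m1 (Complex 1 (Gf K t)))" using Gf_pos[OF t] by (simp add: m1_v1)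
    also have "\<dots> = m2 (Complex 1 (Gf K t))" using Gf_pos[OF t] by (simp add: m1_m1)
    finally show ?thesis unfolding z_def .
  qed
qed

lemma vert_scale: assumes "t > 0" "s > 0" "K > 0"
  shows "hdist (Complex a (Gf K t)) (Complex a (Gf K s)) = K * hdist (Complex a t) (Complex a s)"
proof -
  have Gt: "Gf K t > 0" "Gf K s > 0" using assms Gf_pos by auto
  have "hdist (Complex a (Gf K t)) (Complex a (Gf K s)) = \<bar>ln (Im (Complex a (Gf K t)) / Im (Complex a (Gf K s)))\<bar>"
    by (rule hdist_vert) (simp_all add: Gt)
  hence "hdist (Complex a (Gf K t)) (Complex a (Gf K s)) = \<bar>ln (Gf K t / Gf K s)\<bar>" by simp
  also have "ln (Gf K t / Gf K s) = ln (Gf K t) - ln (Gf K s)" using Gt by (simp add: ln_div)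
  also have "\<dots> = K * (ln (t/2) - ln (s/2))"
    using ln_lift[of "Complex a t" K] ln_lift[of "Complex a s" K] assms
    by (simp add: lift_C algebra_simps)
  also have "ln (t/2) - ln (s/2) = ln (t / s)" using assms by (simp add: ln_div)
  finally have A1: "hdist (Complex a (Gf K t)) (Complex a (Gf K s)) = \<bar>K * ln (t / s)\<bar>" .
  have "hdist (Complex a t) (Complex a s) = \<bar>ln (Im (Complex a t) / Im (Complex a s))\<bar>"
    by (rule hdist_vert) (simp_all add: assms)
  hence "hdist (Complex a t) (Complex a s) = \<bar>ln (t / s)\<bar>" by simp
  thus ?thesis using A1 assms by (simp add: abs_mult)
qed

lemma bottom_char: "z \<in> side_bottom \<longleftrightarrow> (\<exists>t>0. z = m2 (Complex 1 t))"
proof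
  assume z: "z \<in> side_bottom"
  define a where "a = Re z"
  define b where "b = Im z"
  have b: "b > 0" and n: "a^2 + b^2 = 1" using z unfolding side_bottom_def a_def b_def
    by (auto simp: cmod_power2[symmetric])
  have a1: "a < 1"
  proof -
    have "a^2 < 1" using n b by (smt (verit) zero_less_power)
    thus ?thesis by (smt (verit) one_le_power power_one)
  qed
  have q: "(a - 1)^2 + b^2 = 2 * (1 - a)" using n by (simp add: power2_eq_square algebra_simps)
  have d: "(4 - 4 * a) / (2 - 2 * a) = 2" using a1 by (simp add: divide_simps)
  have "Re (m1 z) = 1" unfolding Re_m1 a_def[symmetric] b_def[symmetric] q using d by simp
  hence "m1 z = Complex 1 (Im (m1 z))" by (simp add: complex_eq_iff)
  moreover have "Im (m1 z) > 0" using b b_def Im_m1_pos by simp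
  moreover have "z = m2 (m1 z)" using b b_def m2_m1 by simp
  ultimately show "\<exists>t>0. z = m2 (Complex 1 t)" by metis
next
  assume "\<exists>t>0. z = m2 (Complex 1 t)"
  then obtain t where t: "t > 0" "z = m2 (Complex 1 t)" by blast
  have "Im z > 0" using t Im_m2_pos[of "Complex 1 t"] by simp
  moreover have "cmod z = 1"
  proof -
    have w: "Complex 1 t + 1 \<noteq> 0" using t by (simp add: complex_eq_iff)
    have "z = (Complex 1 t + 1 - 4) / (Complex 1 t + 1)" unfolding t m2_def using w by (simp add: diff_divide_eq_iff)
    also have "Complex 1 t + 1 - 4 = Complex (-2) t" by (simp add: complex_eq_iff)
    also have "Complex 1 t + 1 = Complex 2 t" by (simp add: complex_eq_iff)
    finally have "z = Complex (-2) t / Complex 2 t" .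
    moreover have "cmod (Complex (-2) t) = cmod (Complex 2 t)" by (simp add: complex_norm)
    moreover have "cmod (Complex 2 t) \<noteq> 0" by (simp add: complex_eq_iff)
    ultimately show ?thesis by (simp add: norm_divide)
  qed
  ultimately show "z \<in> side_bottom" unfolding side_bottom_def by simp
qed

lemma right_char: "z \<in> side_right \<longleftrightarrow> (\<exists>t>0. z = Complex 1 t)"
  unfolding side_right_def by (auto simp: complex_eq_iff)
lemma left_char: "z \<in> side_left \<longleftrightarrow> (\<exists>t>0. z = Complex (-1) t)"
  unfolding side_left_def by (auto simp: complex_eq_iff)

lemma image_side:
  assumes sub: "\<And>K z. K > 0 \<Longrightarrow> z \<in> S \<Longrightarrow> F K z \<in> S" and SH: "S \<subseteq> HP" and K: "K > 0"
  shows "F K ` S = S"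
proof
  show "F K ` S \<subseteq> S" using sub K by auto
  show "S \<subseteq> F K ` S"
  proof
    fix z assume z: "z \<in> S"
    have "F (1/K) z \<in> S" using sub z K by simp
    moreover have "F K (F (1/K) z) = z" using F_inv[OF K] z SH by auto
    ultimately show "z \<in> F K ` S" by (metis image_eqI)
  qed
qed

lemma side_props:
  assumes K: "K > 0" and S: "S \<in> triangle_sides"
  shows "F K ` S = S \<and> (\<forall>z\<in>S. \<forall>w\<in>S. hdist (F K z) (F K w) = K * hdist z w)"
proof -
  have "S = side_left \<or> S = side_right \<or> S = side_bottom" using S by (simp add: triangle_sides_def)
  thus ?thesis
  proof (elim disjE)
    assume S: "S = side_left"
    have sub: "F K' z \<in> side_left" if zS: "z \<in> side_left" for K' z
    proof -
      obtain t where t: "t > 0" "z = Complex (-1) t" using zS unfolding left_char by blast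
      have "F K' z = Complex (-1) (Gf K' t)" using t F_left by simp
      thus ?thesis unfolding left_char using Gf_pos[OF t(1)] by blast
    qed
    have "F K ` S = S" unfolding S by (rule image_side[OF sub _ K]) (auto simp: side_left_def)
    moreover have "hdist (F K z) (F K w) = K * hdist z w" if zS: "z \<in> S" and wS: "w \<in> S" for z w
    proof -
      obtain t s where "t > 0" "s > 0" "z = Complex (-1) t" "w = Complex (-1) s"
        using zS wS unfolding S left_char by blast
      thus ?thesis using F_left vert_scale K by simp
    qed
    ultimately show ?thesis by blast
  next
    assume S: "S = side_right"
    have sub: "F K' z \<in> side_right" if zS: "z \<in> side_right" for K' z
    proof -
      obtain t where t: "t > 0" "z = Complex 1 t" using zS unfolding right_char by blast
      have "F K' z = Complex 1 (Gf K' t)" using t F_right by simp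
      thus ?thesis unfolding right_char using Gf_pos[OF t(1)] by blast
    qed
    have "F K ` S = S" unfolding S by (rule image_side[OF sub _ K]) (auto simp: side_right_def)
    moreover have "hdist (F K z) (F K w) = K * hdist z w" if zS: "z \<in> S" and wS: "w \<in> S" for z w
    proof -
      obtain t s where "t > 0" "s > 0" "z = Complex 1 t" "w = Complex 1 s"
        using zS wS unfolding S right_char by blast
      thus ?thesis using F_right vert_scale K by simp
    qed
    ultimately show ?thesis by blast
  next
    assume S: "S = side_bottom"
    have sub: "F K' z \<in> side_bottom" if zS: "z \<in> side_bottom" for K' z
    proof -
      obtain t where t: "t > 0" "z = m2 (Complex 1 t)" using zS unfolding bottom_char by blast
      have "F K' z = m2 (Complex 1 (Gf K' t))" using t F_bottom by simp
      thus ?thesis unfolding bottom_char using Gf_pos[OF t(1)] by blast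
    qed
    have "F K ` S = S" unfolding S by (rule image_side[OF sub _ K]) (auto simp: side_bottom_def)
    moreover have "hdist (F K z) (F K w) = K * hdist z w" if zS: "z \<in> S" and wS: "w \<in> S" for z w
    proof -
      obtain t s where ts: "t > 0" "s > 0" "z = m2 (Complex 1 t)" "w = m2 (Complex 1 s)"
        using zS wS unfolding S bottom_char by blast
      have "hdist (F K z) (F K w) = hdist (m2 (Complex 1 (Gf K t))) (m2 (Complex 1 (Gf K s)))"
        using ts F_bottom by simp
      also have "\<dots> = hdist (Complex 1 (Gf K t)) (Complex 1 (Gf K s))"
        using ts Gf_pos by (intro hdist_m2) auto
      also have "\<dots> = K * hdist (Complex 1 t) (Complex 1 s)" using vert_scale ts K by simp
      also have "hdist (Complex 1 t) (Complex 1 s) = hdist z w"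
        using ts by (simp add: hdist_m2)
      finally show ?thesis .
    qed
    ultimately show ?thesis by blast
  qed
qed

theorem mainTheorem3:
  fixes K :: real
  assumes "K > 1"
  shows "\<exists>f g. homeomorphism ideal_triangle ideal_triangle f g
          \<and> (\<forall>z\<in>ideal_triangle. \<forall>w\<in>ideal_triangle.
               hdist (f z) (f w) \<le> K * hdist z w)
          \<and> (\<forall>S\<in>triangle_sides. f ` S = S
               \<and> (\<forall>z\<in>S. \<forall>w\<in>S. hdist (f z) (f w) = K * hdist z w))"
proof (intro exI conjI)
  have K: "K > 0" using assms by simp
  have K': "1/K > 0" using K by simp
  have TH: "ideal_triangle \<subseteq> HP" by (auto simp: ideal_triangle_def)
  have img: "F k ` ideal_triangle = ideal_triangle" if k: "k > 0" for k
  proof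
    show "F k ` ideal_triangle \<subseteq> ideal_triangle" using F_T[OF k] by auto
    show "ideal_triangle \<subseteq> F k ` ideal_triangle"
    proof
      fix z assume z: "z \<in> ideal_triangle"
      have "F (1/k) z \<in> ideal_triangle" using F_T[of "1/k"] k z by simp
      moreover have "F k (F (1/k) z) = z" using F_inv[OF k] z TH by auto
      ultimately show "z \<in> F k ` ideal_triangle" by (metis image_eqI)
    qed
  qed
  show "homeomorphism ideal_triangle ideal_triangle (F K) (F (1/K))"
    unfolding homeomorphism_def
  proof (intro conjI ballI)
    fix x assume x: "x \<in> ideal_triangle"
    show "F (1/K) (F K x) = x" using F_inv[OF K'] x TH by auto
  next
    fix y assume y: "y \<in> ideal_triangle"
    show "F K (F (1/K) y) = y" using F_inv[OF K] y TH by auto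
  next
    show "F K ` ideal_triangle = ideal_triangle" by (rule img[OF K])
    show "F (1/K) ` ideal_triangle = ideal_triangle" by (rule img[OF K'])
    show "continuous_on ideal_triangle (F K)" by (rule continuous_on_subset[OF F_cont TH])
    show "continuous_on ideal_triangle (F (1/K))" by (rule continuous_on_subset[OF F_cont TH])
  qed
  show "\<forall>z\<in>ideal_triangle. \<forall>w\<in>ideal_triangle. hdist (F K z) (F K w) \<le> K * hdist z w"
  proof (intro ballI)
    fix z w assume "z \<in> ideal_triangle" "w \<in> ideal_triangle"
    hence "Im z > 0" "Im w > 0" using TH by auto
    thus "hdist (F K z) (F K w) \<le> K * hdist z w" using F_lip assms by simp
  qed
  show "\<forall>S\<in>triangle_sides. F K ` S = S \<and> (\<forall>z\<in>S. \<forall>w\<in>S. hdist (F K z) (F K w) = K * hdist z w)"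
    using side_props[OF K] by blast
qed


end
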